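(* Let $|p|<1$ and let $a,b,q,r,s,t$ be nonzero complex numbers such that all expressions below are well defined. Then for every integer $n\ge1$, \begin{align*} \sum_{k=0}^n&\frac{\theta\big(a(rst/q)^k,\,br^k/q^k,\,s^{k-n}/q^k,\,as^nt^k/(bq^k);p\big)}{\theta\big(a,\,b,\,s^{-n},\,as^n/b;p\big)}\\ &\times\frac{(a;rst/q^2,p)_k(b;r,p)_k(s^{-n};s,p)_k(as^n/b;t,p)_k}{(q;q,p)_k(ast/(bq);st/q,p)_k(as^nrt/q;rt/q,p)_k(brs^{1-n}/q;rs/q,p)_k}\,q^k=0. \end{align*}
   Context: For $|p|<1$ and $x\neq 0$, $\theta(x;p)=(x;p)_\infty(p/x;p)_\infty$ where $(x;p)_\infty=\prod_{k\ge 0}(1-xp^k)$, and $\theta(x_1,\dots,x_m;p)=\prod_{i=1}^m\theta(x_i;p)$. For $a\ne0$ and integer $k\ge0$, $(a;q,p)_k=\prod_{j=0}^{k-1}\theta(aq^j;p)$ (empty product $=1$). *)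

theory Defs
  imports "HOL-Analysis.Analysis"
begin

definition qpoch_inf :: "complex \<Rightarrow> complex \<Rightarrow> complex" where
  "qpoch_inf x p = (\<Prod>k. (1 - x * p ^ k))"

definition theta :: "complex \<Rightarrow> complex \<Rightarrow> complex" where
  "theta x p = qpoch_inf x p * qpoch_inf (p / x) p"

definition theta_list :: "complex list \<Rightarrow> complex \<Rightarrow> complex" where
  "theta_list xs p = (\<Prod>x\<leftarrow>xs. theta x p)"

definition ell_poch :: "complex \<Rightarrow> complex \<Rightarrow> complex \<Rightarrow> nat \<Rightarrow> complex" where
  "ell_poch a q p k = (\<Prod>j<k. theta (a * q ^ j) p)"

end

theory Submission
  imports Defs "HOL-Complex_Analysis.Complex_Analysis"
begin

lemma qp_abs_conv:
  assumes "norm p < (1::real)"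
  shows "abs_convergent_prod (\<lambda>k. 1 - x * (p::complex) ^ k)"
  unfolding abs_convergent_prod_conv_summable
proof -
  have "summable (\<lambda>k. norm x * norm p ^ k)"
    using assms by (intro summable_mult summable_geometric) auto
  then show "summable (\<lambda>k. norm (1 - x * p ^ k - 1))"
    by (simp add: norm_mult norm_power)
qed

lemma qp_has_prod:
  assumes "norm p < (1::real)"
  shows "(\<lambda>k. 1 - x * (p::complex) ^ k) has_prod qpoch_inf x p"
  unfolding qpoch_inf_def
  using qp_abs_conv[OF assms] abs_convergent_prod_imp_convergent_prod convergent_prod_has_prod by blast

lemma qp_zero_iff:
  assumes "norm p < (1::real)"
  shows "qpoch_inf x p = 0 \<longleftrightarrow> (\<exists>k. x * p ^ k = 1)"
proof -
  have "qpoch_inf x p = 0 \<longleftrightarrow> (\<exists>k. 1 - x * p ^ k = 0)"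
    using has_prod_eq_0_iff[OF qp_has_prod[OF assms, of x]] by (metis (no_types, lifting) rangeE rangeI)
  also have "\<dots> \<longleftrightarrow> (\<exists>k. x * p ^ k = 1)" by (simp add: right_minus_eq eq_commute[of 1])
  finally show ?thesis .
qed

lemma qp_shift:
  assumes "norm p < (1::real)"
  shows "qpoch_inf x p = (1 - x) * qpoch_inf (x * p) p"
proof (cases "x = 1")
  case True
  have "\<exists>k. 1 * p ^ k = (1::complex)" by (rule exI[of _ 0]) simp
  then show ?thesis using qp_zero_iff[OF assms, of 1] True by simp
next
  case False
  have c: "convergent_prod (\<lambda>k. 1 - x * p ^ k)"
    using qp_abs_conv[OF assms] abs_convergent_prod_imp_convergent_prod by blast
  have "(\<Prod>n. 1 - x * p ^ Suc n) = qpoch_inf x p / (1 - x)"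
    using prodinf_split_head[OF c] False unfolding qpoch_inf_def by simp
  moreover have "(\<Prod>n. 1 - x * p ^ Suc n) = qpoch_inf (x * p) p"
    unfolding qpoch_inf_def by (simp add: mult.assoc mult.commute mult.left_commute)
  ultimately show ?thesis using False by (simp add: field_simps)
qed

lemma qp_nonzero_p:
  assumes "norm p < (1::real)"
  shows "qpoch_inf p p \<noteq> 0"
proof
  assume "qpoch_inf p p = 0"
  then obtain k where "p * p ^ k = 1" using qp_zero_iff[OF assms] by auto
  then have "norm p ^ Suc k = 1" by (metis norm_one norm_power power_Suc)
  moreover have "norm p ^ Suc k < 1" using assms by (subst power_less_one_iff) auto
  ultimately show False by linarith
qed


lemma qp_uniform_limit:
  assumes "norm p < (1::real)" "R > 0"
  shows "uniform_limit (cball 0 R) (\<lambda>N x. \<Prod>n<N. 1 - x * (p::complex) ^ n) (\<lambda>x. qpoch_inf x p) sequentially"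
proof -
  have "uniformly_convergent_on (cball 0 R) (\<lambda>N x. \<Prod>n<N. 1 - x * (p::complex) ^ n)"
  proof (rule uniformly_convergent_on_prod'[where A = "cball 0 R" and f = "\<lambda>n x. 1 - x * p ^ n"])
    show "uniformly_convergent_on (cball 0 R) (\<lambda>N x. \<Sum>n<N. norm (1 - x * p ^ n - 1))"
    proof (rule Weierstrass_m_test')
      fix n and x :: complex assume "x \<in> cball 0 R"
      then have "norm x \<le> R" by simp
      have e: "norm (norm (1 - x * p ^ n - 1)) = norm x * norm p ^ n"
        by (simp add: norm_mult norm_power)
      show "norm (norm (1 - x * p ^ n - 1)) \<le> R * norm p ^ n"
        unfolding e by (rule mult_right_mono[OF \<open>norm x \<le> R\<close>]) simp
    next
      show "summable (\<lambda>n. R * norm p ^ n)"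
        using assms by (intro summable_mult summable_geometric) auto
    qed
  next
    show "\<And>n. continuous_on (cball 0 R) (\<lambda>x. 1 - x * p ^ n)" by (intro continuous_intros)
  qed simp
  then obtain g where g: "uniform_limit (cball 0 R) (\<lambda>N x. \<Prod>n<N. 1 - x * (p::complex) ^ n) g sequentially"
    by (auto simp: uniformly_convergent_on_def)
  have eq: "g z = qpoch_inf z p" if "z \<in> cball 0 R" for z
  proof -
    have "(\<lambda>n. \<Prod>k<n. 1 - z * p ^ k) \<longlonglongrightarrow> g z"
      using tendsto_uniform_limitI[OF g that] .
    moreover have "(\<lambda>n. \<Prod>k<n. 1 - z * p ^ k) \<longlonglongrightarrow> qpoch_inf z p"
      using has_prod_imp_tendsto'[OF qp_has_prod[OF assms(1), of z]] .
    ultimately show ?thesis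
      using LIMSEQ_unique by blast
  qed
  show ?thesis
    using g uniform_limit_cong'[of "cball 0 R" "\<lambda>N x. \<Prod>n<N. 1 - x * (p::complex) ^ n" "\<lambda>N x. \<Prod>n<N. 1 - x * (p::complex) ^ n" g "\<lambda>x. qpoch_inf x p" sequentially] eq
    by blast
qed

lemma qp_holo:
  assumes "norm p < (1::real)"
  shows "(\<lambda>x. qpoch_inf x p) holomorphic_on A"
proof (rule holomorphic_on_subset)
  show "(\<lambda>x. qpoch_inf x p) holomorphic_on UNIV"
  proof (rule holomorphic_uniform_sequence[where f = "\<lambda>N x. \<Prod>n<N. 1 - x * (p::complex) ^ n"])
    fix z :: complex
    have *: "uniform_limit (cball 0 (norm z + 1)) (\<lambda>N x. \<Prod>n<N. 1 - x * (p::complex) ^ n) (\<lambda>x. qpoch_inf x p) sequentially"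
      by (rule qp_uniform_limit[OF assms]) (auto intro: add_nonneg_pos)
    hence "uniform_limit (cball z 1) (\<lambda>N x. \<Prod>n<N. 1 - x * (p::complex) ^ n) (\<lambda>x. qpoch_inf x p) sequentially"
      by (rule uniform_limit_on_subset) (simp add: cball_subset_cball_iff)
    thus "\<exists>d>0. cball z d \<subseteq> UNIV \<and> uniform_limit (cball z d) (\<lambda>N x. \<Prod>n<N. 1 - x * (p::complex) ^ n) (\<lambda>x. qpoch_inf x p) sequentially"
      by (intro exI[of _ 1]) auto
  next
    show "\<And>n. (\<lambda>x. \<Prod>n<n. 1 - x * p ^ n) holomorphic_on UNIV" by (intro holomorphic_intros)
  qed simp
qed auto

lemma qp_holo_comp:
  assumes "norm p < (1::real)" "f holomorphic_on A"
  shows "(\<lambda>x. qpoch_inf (f x) p) holomorphic_on A"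
  using holomorphic_on_compose[OF assms(2) qp_holo[OF assms(1), of "f ` A"]]
  by (simp add: o_def)

lemma theta_holo_comp:
  assumes "norm p < (1::real)" "f holomorphic_on A" "\<And>x. x \<in> A \<Longrightarrow> f x \<noteq> 0"
  shows "(\<lambda>x. theta (f x) p) holomorphic_on A"
proof -
  have "(\<lambda>x. p / f x) holomorphic_on A"
    using assms(2,3) by (intro holomorphic_intros) auto
  then show ?thesis
    unfolding theta_def
    by (intro holomorphic_on_mult qp_holo_comp[OF assms(1)] assms(2))
qed

lemma theta_holo:
  assumes "norm p < (1::real)"
  shows "(\<lambda>x. theta x p) holomorphic_on (-{0})"
  using theta_holo_comp[OF assms, of "\<lambda>x. x" "-{0}"] by auto

lemma theta_factor:
  assumes "norm p < (1::real)"
  shows "theta w p = (1 - w) * (qpoch_inf (w * p) p * qpoch_inf (p / w) p)"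
  unfolding theta_def using qp_shift[OF assms, of w] by simp

lemma theta_one:
  assumes "norm p < (1::real)"
  shows "theta 1 p = 0"
  using theta_factor[OF assms, of 1] by simp

lemma theta_inv:
  assumes "norm p < (1::real)" "x \<noteq> 0"
  shows "theta (1 / x) p = - theta x p / x"
proof -
  have a: "qpoch_inf (1 / x) p = (1 - 1 / x) * qpoch_inf (p / x) p"
    using qp_shift[OF assms(1), of "1/x"] by simp
  have b: "p / (1 / x) = x * p" by simp
  have "theta (1 / x) p = (1 - 1 / x) * (qpoch_inf (x * p) p * qpoch_inf (p / x) p)"
    unfolding theta_def a b by (simp add: algebra_simps)
  also have "\<dots> = - ((1 - x) * (qpoch_inf (x * p) p * qpoch_inf (p / x) p)) / x"
    using assms(2) by (simp add: field_simps)
  also have "\<dots> = - theta x p / x"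
    using theta_factor[OF assms(1), of x] by simp
  finally show ?thesis .
qed

lemma theta_p:
  assumes "norm p < (1::real)" "x \<noteq> 0" "p \<noteq> 0"
  shows "theta (p * x) p = - theta x p / x"
proof -
  have a: "qpoch_inf (1 / x) p = (1 - 1 / x) * qpoch_inf (p / x) p"
    using qp_shift[OF assms(1), of "1/x"] by simp
  have b: "p / (p * x) = 1 / x" using assms(3) by simp
  have "theta (p * x) p = (1 - 1 / x) * (qpoch_inf (x * p) p * qpoch_inf (p / x) p)"
    unfolding theta_def a b by (simp add: algebra_simps)
  also have "\<dots> = - ((1 - x) * (qpoch_inf (x * p) p * qpoch_inf (p / x) p)) / x"
    using assms(2) by (simp add: field_simps)
  also have "\<dots> = - theta x p / x"
    using theta_factor[OF assms(1), of x] by simp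
  finally show ?thesis .
qed

lemma theta_zero:
  assumes "norm p < (1::real)" "x \<noteq> 0" "theta x p = 0"
  shows "\<exists>k::int. x = p powi k"
proof -
  have "qpoch_inf x p = 0 \<or> qpoch_inf (p / x) p = 0"
    using assms(3) unfolding theta_def by simp
  then show ?thesis
  proof
    assume "qpoch_inf x p = 0"
    then obtain k where k: "x * p ^ k = 1" using qp_zero_iff[OF assms(1)] by auto
    then have "p ^ k \<noteq> 0" by (metis mult_zero_right zero_neq_one)
    then have "x = inverse (p ^ k)"
      using k by (simp add: field_simps)
    then have "x = p powi (- int k)"
      by (simp add: power_int_minus)
    then show ?thesis by blast
  next
    assume "qpoch_inf (p / x) p = 0"
    then obtain k where k: "p / x * p ^ k = 1" using qp_zero_iff[OF assms(1)] by auto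
    then have "x = p ^ Suc k"
      using assms(2) by (simp add: field_simps)
    then have "x = p powi (int (Suc k))" by (simp only: power_int_of_nat)
    then show ?thesis by blast
  qed
qed

definition th2 :: "complex \<Rightarrow> complex \<Rightarrow> complex \<Rightarrow> complex" where
  "th2 p c x = theta (x * c) p * theta (x / c) p"

lemma th2_p:
  assumes "norm p < (1::real)" "x \<noteq> 0" "p \<noteq> 0" "c \<noteq> 0"
  shows "th2 p c (p * x) = th2 p c x / x ^ 2"
proof -
  have f1: "theta (p * x * c) p = - theta (x * c) p / (x * c)"
    using theta_p[OF assms(1) _ assms(3), of "x * c"] assms by (simp add: mult.assoc)
  have f2: "theta (p * x / c) p = - theta (x / c) p / (x / c)"
    using theta_p[OF assms(1) _ assms(3), of "x / c"] assms by (simp add: mult.assoc)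
  show ?thesis
    unfolding th2_def f1 f2 using assms by (simp add: field_simps power2_eq_square)
qed

lemma th2_inv:
  assumes "norm p < (1::real)" "x \<noteq> 0" "c \<noteq> 0"
  shows "th2 p c (1 / x) = th2 p c x / x ^ 2"
proof -
  have f1: "theta (1 / x * c) p = - theta (x / c) p / (x / c)"
    using theta_inv[OF assms(1), of "x / c"] assms by simp
  have f2: "theta (1 / x / c) p = - theta (x * c) p / (x * c)"
    using theta_inv[OF assms(1), of "x * c"] assms by simp
  show ?thesis
    unfolding th2_def f1 f2 using assms by (simp add: field_simps power2_eq_square)
qed

lemma annulus_rep:
  fixes a r :: real
  assumes a: "0 < a" "a < 1" and r: "0 < r"
  shows "\<exists>k::int. a \<le> a powi k * r \<and> a powi k * r \<le> 1"
proof -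
  define l where "l = ln a"
  have l: "l < 0" using a unfolding l_def by simp
  define k where "k = ceiling (ln r / (- l))"
  have k1: "ln r / (- l) \<le> k" unfolding k_def by simp
  have k2: "k < ln r / (- l) + 1" unfolding k_def by linarith
  have e1: "k * l + ln r \<le> 0"
  proof -
    have m: "0 < - l" using l by simp
    have "ln r \<le> k * (- l)" using k1 by (simp only: pos_divide_le_eq[OF m])
    then show ?thesis by simp
  qed
  have e2: "l \<le> k * l + ln r"
  proof -
    have "k * (- l) < (ln r / (- l) + 1) * (- l)"
      using k2 l by (intro mult_strict_right_mono) auto
    also have "\<dots> = ln r - l" using l by (simp add: field_simps)
    finally show ?thesis by simp
  qed
  have eq: "a powi k * r = exp (k * l + ln r)"
  proof -
    have "a powi k = a powr (real_of_int k)"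
      using powr_real_of_int'[of a k] a by simp
    also have "\<dots> = exp (k * l)" unfolding powr_def l_def using a by (simp add: mult.commute)
    finally show ?thesis using r by (simp add: exp_add)
  qed
  have "a \<le> a powi k * r"
    unfolding eq using e2 a by (metis exp_le_cancel_iff exp_ln l_def)
  moreover have "a powi k * r \<le> 1"
    unfolding eq using e1 by simp
  ultimately show ?thesis by blast
qed

lemma periodic_powi:
  fixes p x :: complex
  assumes p: "p \<noteq> 0" and H: "\<And>x. x \<noteq> 0 \<Longrightarrow> H (p * x) = H x"
  shows "x \<noteq> 0 \<Longrightarrow> H (p powi k * x) = (H x :: 'b)"
proof (induction k rule: int_induct[where k = 0])
  case base
  then show ?case by simp
next
  case (step1 i)
  have e: "p powi (i + 1) * x = p * (p powi i * x)"
    using p by (simp add: power_int_add mult_ac)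
  have nz: "p powi i * x \<noteq> 0" using p step1 by simp
  have "H (p powi (i + 1) * x) = H (p * (p powi i * x))" by (simp only: e)
  also have "\<dots> = H (p powi i * x)" by (rule H[OF nz])
  also have "\<dots> = H x" using step1 by blast
  finally show ?case .
next
  case (step2 i)
  have "p powi i * x = p * (p powi (i - 1) * x)"
    using p by (simp add: power_int_diff field_simps)
  moreover have "p powi (i - 1) * x \<noteq> 0" using p step2 by simp
  ultimately show ?case using H step2 by metis
qed

lemma periodic_const:
  assumes hp: "norm p < 1" "p \<noteq> 0" and holo: "H holomorphic_on (-{0})"
    and per: "\<And>x. x \<noteq> 0 \<Longrightarrow> H (p * x) = H x"
  shows "\<exists>C. \<forall>x. x \<noteq> 0 \<longrightarrow> H x = C"
proof -
  define K where "K = cball 0 1 \<inter> {x::complex. norm p \<le> norm x}"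
  have "closed {x::complex. norm p \<le> norm x}"
    by (intro closed_Collect_le continuous_intros)
  then have cK: "compact K" unfolding K_def
    by (intro compact_Int_closed) auto
  have K0: "K \<subseteq> -{0}" unfolding K_def using hp(2) by auto
  have "continuous_on K H"
    using holomorphic_on_imp_continuous_on[OF holo] K0 continuous_on_subset by blast
  then have "compact (H ` K)" using cK compact_continuous_image by blast
  then have "bounded (H ` K)" by (rule compact_imp_bounded)
  then obtain B where B0: "\<forall>y\<in>H ` K. norm y \<le> B"
    unfolding bounded_iff by (elim exE)
  have B: "norm (H x) \<le> B" if xK: "x \<in> K" for x
  proof -
    have "H x \<in> H ` K" using xK by (rule imageI)
    then show ?thesis by (rule bspec[OF B0])
  qed
  have rep: "\<exists>k::int. p powi k * x \<in> K" if x0: "x \<noteq> 0" for x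
  proof -
    have a: "0 < norm p" "0 < norm x" using hp x0 by auto
    obtain k :: int where k: "norm p \<le> norm p powi k * norm x" "norm p powi k * norm x \<le> 1"
      using annulus_rep[OF a(1) hp(1) a(2)] by blast
    then have "p powi k * x \<in> K" unfolding K_def
      by (simp add: norm_mult norm_power_int)
    then show ?thesis by blast
  qed
  have bnd: "norm (H x) \<le> B" if x0: "x \<noteq> 0" for x
  proof -
    obtain k :: int where kK: "p powi k * x \<in> K" using rep[OF x0] by blast
    have e: "H (p powi k * x) = H x" by (rule periodic_powi[where H=H, OF hp(2) per x0])
    have "norm (H (p powi k * x)) \<le> B" using B[OF kK] .
    then show ?thesis by (simp only: e)
  qed
  define G where "G = (\<lambda>z. H (exp z))"
  have "G holomorphic_on UNIV"
  proof -
    have "(H \<circ> exp) holomorphic_on UNIV"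
      by (rule holomorphic_on_compose_gen[OF _ holo]) (auto intro: holomorphic_intros)
    then show ?thesis unfolding G_def o_def .
  qed
  moreover have "bounded (range G)"
    unfolding bounded_iff G_def using bnd exp_not_eq_zero by blast
  ultimately have "G constant_on UNIV" by (rule Liouville_theorem)
  then obtain C where C: "\<And>z. G z = C" unfolding constant_on_def by auto
  have "H x = C" if "x \<noteq> 0" for x
    using C[of "Ln x"] that unfolding G_def by simp
  then show ?thesis by blast
qed

lemma ev_neq_at: "eventually (\<lambda>x. x \<noteq> a) (at (a::complex))"
  by (simp add: eventually_at_filter)

lemma ev_nz_at: "a \<noteq> 0 \<Longrightarrow> eventually (\<lambda>x. x \<noteq> 0) (at (a::complex))"
  by (rule tendsto_imp_eventually_ne[OF tendsto_ident_at])

lemma lim_transfer: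
  fixes f g :: "complex \<Rightarrow> complex"
  assumes f: "f \<midarrow>b\<rightarrow> c" and g: "isCont g a" "g a = b"
    and ne: "eventually (\<lambda>x. g x \<noteq> b) (at a)"
    and eq: "eventually (\<lambda>x. f (g x) = f x) (at a)"
  shows "f \<midarrow>a\<rightarrow> c"
proof -
  have "g \<midarrow>a\<rightarrow> b" using isContD[OF g(1)] g(2) by simp
  then have "(\<lambda>x. f (g x)) \<midarrow>a\<rightarrow> c"
    by (rule tendsto_compose_eventually[OF f _ ne])
  then show ?thesis by (rule Lim_transform_eventually[OF _ eq])
qed

lemma th2_holo:
  assumes "norm p < (1::real)" "c \<noteq> 0"
  shows "th2 p c holomorphic_on (-{0})"
proof -
  have "(\<lambda>x. theta (x * c) p) holomorphic_on (-{0})"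
    by (rule theta_holo_comp[OF assms(1)]) (use assms in \<open>auto intro!: holomorphic_intros\<close>)
  moreover have "(\<lambda>x. theta (x / c) p) holomorphic_on (-{0})"
    by (rule theta_holo_comp[OF assms(1)]) (use assms in \<open>auto intro!: holomorphic_intros\<close>)
  ultimately show ?thesis unfolding th2_def[abs_def] by (rule holomorphic_on_mult)
qed

context
  fixes p y u v :: complex
  assumes hp: "norm p < 1" and p0: "p \<noteq> 0" and y0: "y \<noteq> 0" and u0: "u \<noteq> 0" and v0: "v \<noteq> 0"
    and gen1: "theta (u * u) p \<noteq> 0" and gen2: "theta (u * y) p \<noteq> 0" and gen3: "theta (u / y) p \<noteq> 0"
begin

definition "NN x = th2 p y x * th2 p v u - th2 p v x * th2 p y u"
definition "DD x = th2 p u x"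
definition "ff x = NN x / DD x"

lemma NN_holo: "NN holomorphic_on (-{0})"
  unfolding NN_def[abs_def]
  using th2_holo[OF hp y0] th2_holo[OF hp v0]
  by (intro holomorphic_intros) auto

lemma DD_holo: "DD holomorphic_on (-{0})"
  unfolding DD_def[abs_def] using th2_holo[OF hp u0] by simp

lemma NN_p: "x \<noteq> 0 \<Longrightarrow> NN (p * x) = NN x / x ^ 2"
  unfolding NN_def using th2_p[OF hp _ p0 y0, of x] th2_p[OF hp _ p0 v0, of x]
  by (simp add: field_simps)

lemma DD_p: "x \<noteq> 0 \<Longrightarrow> DD (p * x) = DD x / x ^ 2"
  unfolding DD_def using th2_p[OF hp _ p0 u0, of x] by simp

lemma NN_inv: "x \<noteq> 0 \<Longrightarrow> NN (1 / x) = NN x / x ^ 2"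
  unfolding NN_def using th2_inv[OF hp _ y0, of x] th2_inv[OF hp _ v0, of x]
  by (simp add: field_simps)

lemma DD_inv: "x \<noteq> 0 \<Longrightarrow> DD (1 / x) = DD x / x ^ 2"
  unfolding DD_def using th2_inv[OF hp _ u0, of x] by simp

lemma div_cancel_common: "(c::complex) \<noteq> 0 \<Longrightarrow> (a / c) / (b / c) = a / b"
  by (cases "b = 0") (simp_all add: field_simps)

lemma ff_p:
  assumes x: "x \<noteq> 0" shows "ff (p * x) = ff x"
proof -
  have "x ^ 2 \<noteq> 0" using x by simp
  then show ?thesis unfolding ff_def NN_p[OF x] DD_p[OF x] by (rule div_cancel_common)
qed

lemma ff_inv:
  assumes x: "x \<noteq> 0" shows "ff (1 / x) = ff x"
proof -
  have "x ^ 2 \<noteq> 0" using x by simp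
  then show ?thesis unfolding ff_def NN_inv[OF x] DD_inv[OF x] by (rule div_cancel_common)
qed

lemma DD_y: "DD y \<noteq> 0"
proof -
  have "theta (y / u) p = - theta (u / y) p / (u / y)"
    using theta_inv[OF hp, of "u / y"] u0 y0 by simp
  then have "theta (y / u) p \<noteq> 0" using gen3 u0 y0 by simp
  moreover have "theta (y * u) p \<noteq> 0" using gen2 by (simp add: mult.commute)
  ultimately show ?thesis unfolding DD_def th2_def by simp
qed

lemma DD_ev: "z \<noteq> 0 \<Longrightarrow> eventually (\<lambda>w. DD w \<noteq> 0 \<and> w \<in> -{0}) (at z)"
  by (rule non_zero_neighbour_alt[OF DD_holo _ _ _ _ DD_y])
     (auto simp: connected_punctured_universe y0)

lemma ff_lim_u: "\<exists>c. ff \<midarrow>u\<rightarrow> c"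
proof -
  define E where "E w = theta (w * u) p * (- (qpoch_inf (w / u * p) p * qpoch_inf (p / (w / u)) p) / u)" for w
  have Eh: "E holomorphic_on (-{0})"
  proof -
    have h1: "(\<lambda>w. theta (w * u) p) holomorphic_on (-{0})"
      by (rule theta_holo_comp[OF hp]) (use u0 in \<open>auto intro!: holomorphic_intros\<close>)
    have h2: "(\<lambda>w. qpoch_inf (w / u * p) p) holomorphic_on (-{0})"
      by (rule qp_holo_comp[OF hp]) (use u0 in \<open>auto intro!: holomorphic_intros\<close>)
    have h3: "(\<lambda>w. qpoch_inf (p / (w / u)) p) holomorphic_on (-{0})"
      by (rule qp_holo_comp[OF hp]) (use u0 in \<open>auto intro!: holomorphic_intros\<close>)
    show ?thesis unfolding E_def[abs_def]
      by (intro holomorphic_on_mult holomorphic_on_divide holomorphic_on_minus h1 h2 h3 holomorphic_on_const) (use u0 in auto)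
  qed
  have Ec: "isCont E u"
  proof -
    have "continuous_on (-{0}) E" by (rule holomorphic_on_imp_continuous_on[OF Eh])
    then show ?thesis using u0 continuous_on_eq_continuous_at[of "-{0}" E] by auto
  qed
  have Eu: "E u \<noteq> 0"
  proof -
    have "E u = theta (u * u) p * (- (qpoch_inf p p * qpoch_inf p p) / u)"
      unfolding E_def using u0 by simp
    then show ?thesis using gen1 qp_nonzero_p[OF hp] u0 by simp
  qed
  have DDE: "DD w = (w - u) * E w" if "w \<noteq> 0" for w
  proof -
    have tf: "theta (w / u) p = (1 - w / u) * (qpoch_inf (w / u * p) p * qpoch_inf (p / (w / u)) p)"
      by (rule theta_factor[OF hp])
    show ?thesis unfolding DD_def th2_def tf E_def using u0 by (simp add: field_simps)
  qed
  have NNu: "NN u = 0" unfolding NN_def by simp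
  have "NN field_differentiable at u"
    by (rule holomorphic_on_imp_differentiable_at[OF NN_holo]) (use u0 in auto)
  then have "(NN has_field_derivative deriv NN u) (at u)"
    using DERIV_deriv_iff_field_differentiable by blast
  then have l1: "((\<lambda>w. (NN w - NN u) / (w - u)) \<longlongrightarrow> deriv NN u) (at u)"
    using has_field_derivative_iff by blast
  have l2: "(E \<longlongrightarrow> E u) (at u)" using isContD[OF Ec] .
  have l3: "((\<lambda>w. (NN w - NN u) / (w - u) / E w) \<longlongrightarrow> deriv NN u / E u) (at u)"
    by (rule tendsto_divide[OF l1 l2 Eu])
  have ev: "eventually (\<lambda>w. (NN w - NN u) / (w - u) / E w = ff w) (at u)"
  proof -
    have "eventually (\<lambda>w. w \<noteq> u \<and> w \<noteq> 0) (at u)"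
      by (rule eventually_conj[OF ev_neq_at ev_nz_at[OF u0]])
    then show ?thesis
    proof (rule eventually_mono)
      fix w assume w: "w \<noteq> u \<and> w \<noteq> 0"
      show "(NN w - NN u) / (w - u) / E w = ff w"
        unfolding ff_def NNu DDE[of w, OF conjunct2[OF w]] by simp
    qed
  qed
  show ?thesis using Lim_transform_eventually[OF l3 ev] by blast
qed

lemma ff_lim_p:
  assumes w: "w \<noteq> 0" and l: "ff \<midarrow>w\<rightarrow> c"
  shows "ff \<midarrow>(p * w)\<rightarrow> c"
proof (rule lim_transfer[OF l, where g = "\<lambda>x. x / p"])
  show "isCont (\<lambda>x. x / p) (p * w)" using p0 by (intro continuous_intros) auto
  show "p * w / p = w" using p0 by simp
  show "eventually (\<lambda>x. x / p \<noteq> w) (at (p * w))"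
    using ev_neq_at[of "p * w"] by (rule eventually_mono) (use p0 in \<open>auto simp: field_simps\<close>)
  show "eventually (\<lambda>x. ff (x / p) = ff x) (at (p * w))"
  proof (rule eventually_mono[OF ev_nz_at])
    show "p * w \<noteq> 0" using p0 w by simp
  next
    fix x :: complex assume x: "x \<noteq> 0"
    have "ff (p * (x / p)) = ff (x / p)" by (rule ff_p) (use x p0 in simp)
    then show "ff (x / p) = ff x" using p0 by simp
  qed
qed

lemma ff_lim_pinv:
  assumes w: "w \<noteq> 0" and l: "ff \<midarrow>w\<rightarrow> c"
  shows "ff \<midarrow>(w / p)\<rightarrow> c"
proof (rule lim_transfer[OF l, where g = "\<lambda>x. p * x"])
  show "isCont (\<lambda>x. p * x) (w / p)" by (intro continuous_intros)
  show "p * (w / p) = w" using p0 by simp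
  show "eventually (\<lambda>x. p * x \<noteq> w) (at (w / p))"
    using ev_neq_at[of "w / p"] by (rule eventually_mono) (use p0 in \<open>auto simp: field_simps\<close>)
  show "eventually (\<lambda>x. ff (p * x) = ff x) (at (w / p))"
  proof (rule eventually_mono[OF ev_nz_at])
    show "w / p \<noteq> 0" using p0 w by simp
  next
    fix x :: complex assume x: "x \<noteq> 0"
    show "ff (p * x) = ff x" by (rule ff_p[OF x])
  qed
qed

lemma ff_lim_inv:
  assumes w: "w \<noteq> 0" and l: "ff \<midarrow>w\<rightarrow> c"
  shows "ff \<midarrow>(1 / w)\<rightarrow> c"
proof (rule lim_transfer[OF l, where g = "\<lambda>x. 1 / x"])
  show "isCont (\<lambda>x. 1 / x) (1 / w)" using w by (intro continuous_intros) auto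
  show "1 / (1 / w) = w" by simp
  show "eventually (\<lambda>x. 1 / x \<noteq> w) (at (1 / w))"
    using ev_neq_at[of "1 / w"] by (rule eventually_mono) (use w in \<open>auto simp: field_simps\<close>)
  show "eventually (\<lambda>x. ff (1 / x) = ff x) (at (1 / w))"
  proof (rule eventually_mono[OF ev_nz_at])
    show "1 / w \<noteq> 0" using w by simp
  next
    fix x :: complex assume x: "x \<noteq> 0"
    show "ff (1 / x) = ff x" by (rule ff_inv[OF x])
  qed
qed

lemma ff_lim_powi:
  assumes w: "w \<noteq> 0" and l: "ff \<midarrow>w\<rightarrow> c"
  shows "ff \<midarrow>(p powi k * w)\<rightarrow> c"
proof (induction k rule: int_induct[where k = 0])
  case base
  then show ?case using l by simp
next
  case (step1 i)
  have e: "p powi (i + 1) * w = p * (p powi i * w)"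
    using p0 by (simp add: power_int_add mult_ac)
  have nz: "p powi i * w \<noteq> 0" using p0 w by simp
  show ?case unfolding e by (rule ff_lim_p[OF nz step1(2)])
next
  case (step2 i)
  have e: "p powi (i - 1) * w = (p powi i * w) / p"
    using p0 by (simp add: power_int_diff field_simps)
  have nz: "p powi i * w \<noteq> 0" using p0 w by simp
  show ?case unfolding e by (rule ff_lim_pinv[OF nz step2(2)])
qed

lemma ff_lim_all:
  assumes z: "z \<noteq> 0"
  shows "\<exists>c. ff \<midarrow>z\<rightarrow> c"
proof (cases "DD z = 0")
  case False
  have "isCont NN z"
    using holomorphic_on_imp_continuous_on[OF NN_holo] z continuous_on_eq_continuous_at[of "-{0}" NN] by auto
  moreover have "isCont DD z"
    using holomorphic_on_imp_continuous_on[OF DD_holo] z continuous_on_eq_continuous_at[of "-{0}" DD] by auto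
  ultimately have "isCont ff z" unfolding ff_def[abs_def] using False by (intro continuous_intros) auto
  then show ?thesis using isContD by blast
next
  case True
  obtain c where c: "ff \<midarrow>u\<rightarrow> c" using ff_lim_u by blast
  have cinv: "ff \<midarrow>(1 / u)\<rightarrow> c" by (rule ff_lim_inv[OF u0 c])
  have "theta (z * u) p = 0 \<or> theta (z / u) p = 0"
    using True unfolding DD_def th2_def by simp
  then show ?thesis
  proof
    assume "theta (z * u) p = 0"
    then obtain k :: int where k: "z * u = p powi k"
      using theta_zero[OF hp, of "z * u"] z u0 by auto
    then have "z = p powi k * (1 / u)" using u0 by (simp add: field_simps)
    then show ?thesis using ff_lim_powi[of "1 / u" c k] cinv u0 by auto
  next
    assume "theta (z / u) p = 0"
    then obtain k :: int where k: "z / u = p powi k"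
      using theta_zero[OF hp, of "z / u"] z u0 by auto
    then have "z = p powi k * u" using u0 by (simp add: field_simps)
    then show ?thesis using ff_lim_powi[of u c k] c u0 by auto
  qed
qed

lemma ff_analytic_at:
  assumes z: "z \<noteq> 0" and d: "DD z \<noteq> 0"
  shows "ff analytic_on {z}"
proof -
  have "NN analytic_on {z}"
    by (rule holomorphic_on_imp_analytic_at[OF NN_holo]) (use z in auto)
  moreover have "DD analytic_on {z}"
    by (rule holomorphic_on_imp_analytic_at[OF DD_holo]) (use z in auto)
  ultimately show ?thesis unfolding ff_def[abs_def]
    by (rule analytic_on_divide) (use d in auto)
qed

lemma H_analytic: "remove_sings ff analytic_on (-{0})"
proof (rule analytic_on_analytic_at[THEN iffD2, OF ballI])
  fix z :: complex assume "z \<in> -{0}"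
  then have z: "z \<noteq> 0" by simp
  show "remove_sings ff analytic_on {z}"
  proof (cases "DD z = 0")
    case False
    show ?thesis by (rule remove_sings_analytic_on[OF ff_analytic_at[OF z False]])
  next
    case True
    obtain d where d: "d > 0" and dP: "\<And>x. x \<noteq> z \<Longrightarrow> dist x z < d \<Longrightarrow> DD x \<noteq> 0 \<and> x \<in> -{0}"
      using DD_ev[OF z] unfolding eventually_at by auto
    have "ff holomorphic_on (ball z d - {z})"
    proof -
      have dP': "DD x \<noteq> 0 \<and> x \<in> -{0}" if "x \<in> ball z d - {z}" for x
      proof -
        have "x \<noteq> z" "dist x z < d" using that by (auto simp: dist_commute)
        then show ?thesis by (rule dP)
      qed
      have sub: "ball z d - {z} \<subseteq> -{0}" using dP' by blast
      have nz: "\<And>x. x \<in> ball z d - {z} \<Longrightarrow> DD x \<noteq> 0" using dP' by blast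
      show ?thesis unfolding ff_def[abs_def]
        by (rule holomorphic_on_divide[OF holomorphic_on_subset[OF NN_holo sub] holomorphic_on_subset[OF DD_holo sub] nz])
    qed
    then have "ff analytic_on (ball z d - {z})"
      by (subst analytic_on_open) auto
    then have iso: "isolated_singularity_at ff z"
      unfolding isolated_singularity_at_def using d by blast
    obtain c where "ff \<midarrow>z\<rightarrow> c" using ff_lim_all[OF z] by blast
    then show ?thesis by (rule remove_sings_analytic_at[OF iso])
  qed
qed

lemma H_p:
  assumes z: "z \<noteq> 0"
  shows "remove_sings ff (p * z) = remove_sings ff z"
proof -
  obtain c where c: "ff \<midarrow>z\<rightarrow> c" using ff_lim_all[OF z] by blast
  have "remove_sings ff z = c" by (rule remove_sings_eqI[OF c])
  moreover have "remove_sings ff (p * z) = c" by (rule remove_sings_eqI[OF ff_lim_p[OF z c]])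
  ultimately show ?thesis by simp
qed

lemma gen_identity:
  assumes x: "x \<noteq> 0"
  shows "NN x = (u / y) * th2 p v y * DD x"
proof -
  have Hh: "remove_sings ff holomorphic_on (-{0})"
    by (rule analytic_imp_holomorphic[OF H_analytic])
  obtain C where C: "\<And>x. x \<noteq> 0 \<Longrightarrow> remove_sings ff x = C"
    using periodic_const[OF hp p0 Hh H_p] by blast
  have eq1: "NN w = C * DD w" if w: "w \<noteq> 0" and d: "DD w \<noteq> 0" for w
  proof -
    have "ff w = C" using C[OF w] remove_sings_at_analytic[OF ff_analytic_at[OF w d]] by simp
    then show ?thesis unfolding ff_def using d by (simp add: field_simps)
  qed
  have eq2: "NN w = C * DD w" if w: "w \<noteq> 0" for w
  proof (cases "DD w = 0")
    case False
    then show ?thesis using eq1[OF w] by simp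
  next
    case True
    have cN: "isCont NN w"
      using holomorphic_on_imp_continuous_on[OF NN_holo] w continuous_on_eq_continuous_at[of "-{0}" NN] by auto
    have cD: "isCont DD w"
      using holomorphic_on_imp_continuous_on[OF DD_holo] w continuous_on_eq_continuous_at[of "-{0}" DD] by auto
    have l1: "NN \<midarrow>w\<rightarrow> NN w" using isContD[OF cN] .
    have ev: "eventually (\<lambda>t. NN t = C * DD t) (at w)"
      using DD_ev[OF w] by (rule eventually_mono) (use eq1 in auto)
    have l2: "(\<lambda>t. C * DD t) \<midarrow>w\<rightarrow> NN w" by (rule Lim_transform_eventually[OF l1 ev])
    have l3: "(\<lambda>t. C * DD t) \<midarrow>w\<rightarrow> C * DD w"
      by (intro tendsto_mult tendsto_const isContD[OF cD])
    have "NN w = C * DD w" using tendsto_unique[OF _ l2 l3] by simp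
    then show ?thesis .
  qed
  have thy: "th2 p y y = 0" unfolding th2_def using y0 theta_one[OF hp] by simp
  have inv: "th2 p u y = - (y / u) * th2 p y u"
  proof -
    have tf: "theta (y / u) p = - theta (u / y) p / (u / y)"
      using theta_inv[OF hp, of "u / y"] u0 y0 by simp
    have tf2: "theta (y / u) p = - (y / u) * theta (u / y) p"
      unfolding tf using u0 y0 by simp
    have yu: "theta (y * u) p = theta (u * y) p" by (simp add: mult.commute)
    show ?thesis unfolding th2_def tf2 yu by (simp add: mult_ac)
  qed
  have Dy: "DD y \<noteq> 0" by (rule DD_y)
  have "NN y = C * DD y" by (rule eq2[OF y0])
  then have "- th2 p v y * th2 p y u = C * (- (y / u) * th2 p y u)"
    unfolding NN_def DD_def thy inv by simp
  moreover have "th2 p y u \<noteq> 0" using Dy unfolding DD_def inv by simp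
  ultimately have "C = (u / y) * th2 p v y" using u0 y0 by (simp add: field_simps)
  then show ?thesis using eq2[OF x] by simp
qed

end

lemma P3_gen:
  fixes p y u v x :: complex
  assumes "norm p < 1" "p \<noteq> 0" "y \<noteq> 0" "u \<noteq> 0" "v \<noteq> 0"
    "theta (u * u) p \<noteq> 0" "theta (u * y) p \<noteq> 0" "theta (u / y) p \<noteq> 0" "x \<noteq> 0"
  shows "th2 p y x * th2 p v u - th2 p v x * th2 p y u = (u / y) * th2 p v y * th2 p u x"
  using gen_identity[OF assms] unfolding NN_def[OF assms(1-8)] DD_def[OF assms(1-8)] .

lemma dense_zero:
  fixes F :: "complex \<Rightarrow> complex"
  assumes cont: "continuous_on (-{0}) F" and Z: "countable Z"
    and good: "\<And>u. u \<noteq> 0 \<Longrightarrow> u \<notin> Z \<Longrightarrow> F u = 0" and u0: "u0 \<noteq> 0"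
  shows "F u0 = 0"
proof (rule ccontr)
  assume F0: "F u0 \<noteq> 0"
  define U where "U = (-{0}) \<inter> F -` (-{0})"
  have oU: "open U" unfolding U_def
    by (rule continuous_open_preimage[OF cont]) auto
  have "u0 \<in> U" unfolding U_def using u0 F0 by simp
  then obtain e where e: "e > 0" "ball u0 e \<subseteq> U" using openE[OF oU] by metis
  have "uncountable (ball u0 e)" by (rule uncountable_ball[OF e(1)])
  then have "\<not> ball u0 e \<subseteq> Z" using Z countable_subset by blast
  then obtain w where w: "w \<in> ball u0 e" "w \<notin> Z" by blast
  then have "w \<in> U" using e(2) by blast
  then have "w \<noteq> 0" "F w \<noteq> 0" unfolding U_def by auto
  then show False using good[OF _ w(2)] by blast
qed

lemma countable_powi: "countable (range (\<lambda>k::int. (p::complex) powi k))"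
  by (rule countable_image) simp

lemma sq_cases:
  fixes u :: complex
  shows "u = csqrt (u * u) \<or> u = - csqrt (u * u)"
proof -
  define c where "c = csqrt (u * u)"
  have "c * c = u * u" unfolding c_def using power2_csqrt[of "u * u"] by (simp only: power2_eq_square)
  then have "(u - c) * (u + c) = 0" by (simp add: algebra_simps)
  then have "u - c = 0 \<or> u + c = 0" by (simp only: mult_eq_0_iff)
  then have "u = c \<or> u = - c" by (metis right_minus_eq add_eq_0_iff neg_equal_iff_equal minus_minus)
  then show ?thesis unfolding c_def .
qed

lemma sq_preimage_countable:
  assumes P: "countable (P :: complex set)"
  shows "countable {u. u * u \<in> P}"
proof -
  have sub: "{u. u * u \<in> P} \<subseteq> (\<Union>w\<in>P. {csqrt w, - csqrt w})"
  proof
    fix u assume "u \<in> {u. u * u \<in> P}"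
    then have uP: "u * u \<in> P" by simp
    have "u \<in> {csqrt (u * u), - csqrt (u * u)}" using sq_cases[of u] by (simp only: insert_iff empty_iff simp_thms)
    then show "u \<in> (\<Union>w\<in>P. {csqrt w, - csqrt w})" by (rule UN_I[OF uP])
  qed
  have "countable (\<Union>w\<in>P. {csqrt w, - csqrt w})"
  proof (rule countable_UN[OF P])
    fix w assume "w \<in> P"
    show "countable {csqrt w, - csqrt w}" by (rule countable_finite) simp
  qed
  then show ?thesis by (rule countable_subset[OF sub])
qed

lemma theta_zero_set:
  assumes "norm p < 1"
  shows "{w. w \<noteq> 0 \<and> theta w p = 0} \<subseteq> range (\<lambda>k::int. p powi k)"
proof
  fix w assume "w \<in> {w. w \<noteq> 0 \<and> theta w p = 0}"
  then have "w \<noteq> 0" "theta w p = 0" by auto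
  then obtain k :: int where "w = p powi k" using theta_zero[OF assms] by blast
  then show "w \<in> range (\<lambda>k::int. p powi k)" by (rule range_eqI)
qed

lemma bad_countable:
  fixes p y :: complex
  assumes hp: "norm p < 1" and y0: "y \<noteq> 0"
  shows "countable {u. u \<noteq> 0 \<and> (theta (u * u) p = 0 \<or> theta (u * y) p = 0 \<or> theta (u / y) p = 0)}"
proof -
  define P where "P = range (\<lambda>k::int. p powi k)"
  have cP: "countable P" unfolding P_def by (rule countable_powi)
  have Pz: "\<And>w. w \<noteq> 0 \<Longrightarrow> theta w p = 0 \<Longrightarrow> w \<in> P"
    using theta_zero_set[OF hp] unfolding P_def by blast
  have sub: "{u. u \<noteq> 0 \<and> (theta (u * u) p = 0 \<or> theta (u * y) p = 0 \<or> theta (u / y) p = 0)}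
      \<subseteq> {u. u * u \<in> P} \<union> (\<lambda>w. w / y) ` P \<union> (\<lambda>w. w * y) ` P"
  proof
    fix u assume "u \<in> {u. u \<noteq> 0 \<and> (theta (u * u) p = 0 \<or> theta (u * y) p = 0 \<or> theta (u / y) p = 0)}"
    then have u0: "u \<noteq> 0" and h: "theta (u * u) p = 0 \<or> theta (u * y) p = 0 \<or> theta (u / y) p = 0" by auto
    show "u \<in> {u. u * u \<in> P} \<union> (\<lambda>w. w / y) ` P \<union> (\<lambda>w. w * y) ` P"
    proof -
      { assume "theta (u * u) p = 0"
        then have "u * u \<in> P" using Pz u0 by simp
        then have ?thesis by blast }
      moreover
      { assume "theta (u * y) p = 0"
        then have "u * y \<in> P" using Pz u0 y0 by simp
        moreover have "u = (u * y) / y" using y0 by simp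
        ultimately have ?thesis by blast }
      moreover
      { assume "theta (u / y) p = 0"
        then have "u / y \<in> P" using Pz u0 y0 by simp
        moreover have "u = (u / y) * y" using y0 by simp
        ultimately have ?thesis by blast }
      ultimately show ?thesis using h by blast
    qed
  qed
  have "countable ({u. u * u \<in> P} \<union> (\<lambda>w. w / y) ` P \<union> (\<lambda>w. w * y) ` P)"
    using sq_preimage_countable[OF cP] cP by simp
  then show ?thesis by (rule countable_subset[OF sub])
qed

lemma P3_all:
  fixes p y u v x :: complex
  assumes hp: "norm p < 1" and p0: "p \<noteq> 0" and y0: "y \<noteq> 0" and u0: "u \<noteq> 0" and v0: "v \<noteq> 0" and x0: "x \<noteq> 0"
  shows "th2 p y x * th2 p v u - th2 p v x * th2 p y u = (u / y) * th2 p v y * th2 p u x"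
proof -
  define F where "F u = th2 p y x * th2 p v u - th2 p v x * th2 p y u - (u / y) * th2 p v y * th2 p u x" for u
  have h1: "th2 p v holomorphic_on (-{0})" by (rule th2_holo[OF hp v0])
  have h2: "th2 p y holomorphic_on (-{0})" by (rule th2_holo[OF hp y0])
  have h3: "(\<lambda>u. th2 p u x) holomorphic_on (-{0})"
  proof -
    have a: "(\<lambda>u. theta (x * u) p) holomorphic_on (-{0})"
      by (rule theta_holo_comp[OF hp]) (use x0 in \<open>auto intro!: holomorphic_intros\<close>)
    have b: "(\<lambda>u. theta (x / u) p) holomorphic_on (-{0})"
      by (rule theta_holo_comp[OF hp]) (use x0 in \<open>auto intro!: holomorphic_intros\<close>)
    show ?thesis unfolding th2_def by (rule holomorphic_on_mult[OF a b])
  qed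
  have "F holomorphic_on (-{0})"
    unfolding F_def[abs_def]
    by (intro holomorphic_intros h1 h2 h3 holomorphic_on_mult holomorphic_on_diff holomorphic_on_divide holomorphic_on_const) (use y0 in auto)
  then have cont: "continuous_on (-{0}) F" by (rule holomorphic_on_imp_continuous_on)
  have good: "F w = 0" if w0: "w \<noteq> 0" and wZ: "w \<notin> {u. u \<noteq> 0 \<and> (theta (u * u) p = 0 \<or> theta (u * y) p = 0 \<or> theta (u / y) p = 0)}" for w
  proof -
    have g: "theta (w * w) p \<noteq> 0" "theta (w * y) p \<noteq> 0" "theta (w / y) p \<noteq> 0" using w0 wZ by auto
    show ?thesis unfolding F_def using P3_gen[OF hp p0 y0 w0 v0 g x0] by simp
  qed
  have "F u = 0" by (rule dense_zero[OF cont bad_countable[OF hp y0] good u0])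
  then show ?thesis unfolding F_def by simp
qed

lemma theta_p0: "theta w 0 = 1 - w"
proof -
  have q00: "qpoch_inf 0 0 = 1" unfolding qpoch_inf_def by simp
  have "qpoch_inf w 0 = (1 - w) * qpoch_inf (w * 0) 0" by (rule qp_shift) simp
  then have "qpoch_inf w 0 = 1 - w" using q00 by simp
  then show ?thesis unfolding theta_def using q00 by simp
qed

lemma T_identity:
  fixes p b g d Q :: complex
  assumes hp: "norm p < 1" and b0: "b \<noteq> 0" and g0: "g \<noteq> 0" and d0: "d \<noteq> 0" and Q0: "Q \<noteq> 0"
  shows "theta (b * g * d / Q ^ 2) p * theta b p * theta g p * theta d p
       - theta Q p * theta (g * d / Q) p * theta (b * d / Q) p * theta (b * g / Q) p
       = Q * theta (b * g * d / Q) p * theta (b / Q) p * theta (g / Q) p * theta (d / Q) p"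
proof (cases "p = 0")
  case True
  show ?thesis unfolding True theta_p0 using b0 g0 d0 Q0
    by (simp add: field_simps power2_eq_square)
next
  case False
  define x where "x = csqrt (b * g)"
  have xx: "x * x = b * g" unfolding x_def using power2_csqrt[of "b * g"] by (simp only: power2_eq_square)
  have x0: "x \<noteq> 0" unfolding x_def using b0 g0 by simp
  define y where "y = b / x"
  define u where "u = d * x / Q"
  define v where "v = Q / x"
  have y0: "y \<noteq> 0" unfolding y_def using b0 x0 by simp
  have u0: "u \<noteq> 0" unfolding u_def using d0 x0 Q0 by simp
  have v0: "v \<noteq> 0" unfolding v_def using Q0 x0 by simp
  have a1: "x * y = b" unfolding y_def using x0 by simp
  have a2: "x / y = g" unfolding y_def using x0 b0 xx by (simp add: field_simps)
  have a3: "u * v = d" unfolding u_def v_def using x0 Q0 by simp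
  have a4: "u / v = b * g * d / Q ^ 2" unfolding u_def v_def using x0 Q0 xx by (simp add: field_simps power2_eq_square)
  have a5: "x * v = Q" unfolding v_def using x0 by simp
  have a6: "x / v = b * g / Q" unfolding v_def using x0 Q0 xx by (simp add: field_simps)
  have a7: "u * y = b * d / Q" unfolding u_def y_def using x0 Q0 by (simp add: field_simps)
  have a8: "u / y = g * d / Q" unfolding u_def y_def using x0 Q0 b0 xx by (simp add: field_simps)
  have a9: "y * v = 1 / (g / Q)" unfolding y_def v_def using x0 Q0 b0 g0 xx by (simp add: field_simps)
  have a10: "y / v = b / Q" unfolding y_def v_def using x0 Q0 by (simp add: field_simps)
  have a11: "x * u = b * g * d / Q" unfolding u_def using x0 Q0 xx by (simp add: field_simps)
  have a12: "x / u = 1 / (d / Q)" unfolding u_def using x0 Q0 d0 by (simp add: field_simps)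
  have P: "th2 p y x * th2 p v u - th2 p v x * th2 p y u = (u / y) * th2 p v y * th2 p u x"
    by (rule P3_all[OF hp False y0 u0 v0 x0])
  have i1: "theta (1 / (g / Q)) p = - theta (g / Q) p / (g / Q)"
    by (rule theta_inv[OF hp]) (use g0 Q0 in simp)
  have i2: "theta (1 / (d / Q)) p = - theta (d / Q) p / (d / Q)"
    by (rule theta_inv[OF hp]) (use d0 Q0 in simp)
  have yv: "y * v = v * y" by (simp add: mult.commute)
  have xu: "x * u = u * x" by (simp add: mult.commute)
  have yx: "x * y = y * x" by (simp add: mult.commute)
  have vx: "x * v = v * x" by (simp add: mult.commute)
  have uv: "u * v = v * u" by (simp add: mult.commute)
  have uy: "u * y = y * u" by (simp add: mult.commute)
  have P2: "theta (x * y) p * theta (x / y) p * (theta (u * v) p * theta (u / v) p)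
      - theta (x * v) p * theta (x / v) p * (theta (u * y) p * theta (u / y) p)
      = (u / y) * (theta (y * v) p * theta (y / v) p) * (theta (x * u) p * theta (x / u) p)"
    using P unfolding th2_def by (simp only: yv xu yx vx uv uy)
  show ?thesis
    using P2 unfolding a1 a2 a3 a4 a5 a6 a7 a8 a9 a10 a11 a12 i1 i2 using g0 d0 Q0
    by (simp add: field_simps)
qed

lemma ell_poch_Suc: "ell_poch a q p (Suc m) = ell_poch a q p m * theta (a * q ^ m) p"
  unfolding ell_poch_def by simp

lemma ell_poch_Suc': "ell_poch a q p (Suc m) = theta a p * ell_poch (a * q) q p m"
  unfolding ell_poch_def prod.lessThan_Suc_shift by (simp add: mult.assoc)

lemma ell_poch_0: "ell_poch a q p 0 = 1"
  unfolding ell_poch_def by simp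

lemma theta_list4: "theta_list [x1, x2, x3, x4] p = theta x1 p * theta x2 p * theta x3 p * theta x4 p"
  unfolding theta_list_def by (simp add: mult.assoc)

lemma step_identity:
  fixes p a b q r s t :: complex and n m :: nat
  assumes hp: "norm p < 1" and nz: "a \<noteq> 0" "b \<noteq> 0" "q \<noteq> 0" "r \<noteq> 0" "s \<noteq> 0" "t \<noteq> 0"
  shows "theta (a * (r * s * t / q ^ 2) * (r * s * t / q ^ 2) ^ m) p * theta (b * r * r ^ m) p
          * theta (1 / s ^ n * s * s ^ m) p * theta (a * s ^ n / b * t * t ^ m) p
       - theta (q * q ^ m) p * theta (a * s * t / (b * q) * (s * t / q) ^ m) p
          * theta (a * s ^ n * r * t / q * (r * t / q) ^ m) p
          * theta (b * r * s / (q * s ^ n) * (r * s / q) ^ m) p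
       = q ^ Suc m * (theta (a * (r * s * t / q) ^ Suc m) p * theta (b * r ^ Suc m / q ^ Suc m) p
          * theta (s ^ Suc m / (s ^ n * q ^ Suc m)) p * theta (a * s ^ n * t ^ Suc m / (b * q ^ Suc m)) p)"
proof -
  define B where "B = b * r ^ Suc m"
  define Gm where "Gm = s ^ Suc m / s ^ n"
  define Dl where "Dl = a * s ^ n * t ^ Suc m / b"
  define Q where "Q = q ^ Suc m"
  have B0: "B \<noteq> 0" unfolding B_def using nz by simp
  have G0: "Gm \<noteq> 0" unfolding Gm_def using nz by simp
  have D0: "Dl \<noteq> 0" unfolding Dl_def using nz by simp
  have Q0: "Q \<noteq> 0" unfolding Q_def using nz by simp
  have T: "theta (B * Gm * Dl / Q ^ 2) p * theta B p * theta Gm p * theta Dl p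
       - theta Q p * theta (Gm * Dl / Q) p * theta (B * Dl / Q) p * theta (B * Gm / Q) p
       = Q * theta (B * Gm * Dl / Q) p * theta (B / Q) p * theta (Gm / Q) p * theta (Dl / Q) p"
    by (rule T_identity[OF hp B0 G0 D0 Q0])
  have qq: "(q ^ 2) ^ m = (q ^ m) ^ 2" by (simp add: power_mult[symmetric] mult.commute)
  have e1: "a * (r * s * t / q ^ 2) * (r * s * t / q ^ 2) ^ m = B * Gm * Dl / Q ^ 2"
    unfolding B_def Gm_def Dl_def Q_def using nz by (simp add: field_simps power_mult_distrib qq)
  have e2: "b * r * r ^ m = B" unfolding B_def by simp
  have e3: "1 / s ^ n * s * s ^ m = Gm" unfolding Gm_def by simp
  have e4: "a * s ^ n / b * t * t ^ m = Dl" unfolding Dl_def by simp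
  have e5: "q * q ^ m = Q" unfolding Q_def by simp
  have e6: "a * s * t / (b * q) * (s * t / q) ^ m = Gm * Dl / Q"
    unfolding Gm_def Dl_def Q_def using nz by (simp add: field_simps power_mult_distrib)
  have e7: "a * s ^ n * r * t / q * (r * t / q) ^ m = B * Dl / Q"
    unfolding B_def Dl_def Q_def using nz by (simp add: field_simps power_mult_distrib)
  have e8: "b * r * s / (q * s ^ n) * (r * s / q) ^ m = B * Gm / Q"
    unfolding B_def Gm_def Q_def using nz by (simp add: field_simps power_mult_distrib)
  have e9: "a * (r * s * t / q) ^ Suc m = B * Gm * Dl / Q"
    unfolding B_def Gm_def Dl_def Q_def using nz by (simp add: field_simps power_mult_distrib)
  have e10: "b * r ^ Suc m / q ^ Suc m = B / Q" unfolding B_def Q_def by simp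
  have e11: "s ^ Suc m / (s ^ n * q ^ Suc m) = Gm / Q" unfolding Gm_def Q_def by simp
  have e12: "a * s ^ n * t ^ Suc m / (b * q ^ Suc m) = Dl / Q" unfolding Dl_def Q_def by simp
  have e13: "q ^ Suc m = Q" unfolding Q_def ..
  show ?thesis unfolding e1 e2 e3 e4 e5 e6 e7 e8 e9 e10 e11 e12 unfolding e13 T
    by (simp add: mult_ac)
qed

lemma alg_step:
  fixes N D Y X L0 TL qq :: complex
  assumes "L0 \<noteq> 0" "D \<noteq> 0" "Y \<noteq> 0" "X - Y = qq * TL"
  shows "N / D + TL / L0 * (L0 * N) / (D * Y) * qq = N * X / (D * Y)"
proof -
  have X: "X = Y + qq * TL" using assms(4) by (simp add: algebra_simps)
  show ?thesis unfolding X using assms(1-3) by (simp add: field_simps)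
qed

lemma theta_list_ne_L0:
  "theta_list [a, b, c, d] p = theta a p * theta b p * theta c p * theta d p"
  by (rule theta_list4)

theorem mainTheorem7:
  fixes p a b q r s t :: complex and n :: nat
  assumes hp: "norm p < 1"
    and nz: "a \<noteq> 0" "b \<noteq> 0" "q \<noteq> 0" "r \<noteq> 0" "s \<noteq> 0" "t \<noteq> 0"
    and hn: "n \<ge> 1"
    and den1: "theta_list [a, b, 1 / s ^ n, a * s ^ n / b] p \<noteq> 0"
    and den2: "\<And>k. k \<le> n \<Longrightarrow>
        ell_poch q q p k * ell_poch (a * s * t / (b * q)) (s * t / q) p k
        * ell_poch (a * s ^ n * r * t / q) (r * t / q) p k
        * ell_poch (b * r * s / (q * s ^ n)) (r * s / q) p k \<noteq> 0"
  shows "(\<Sum>k=0..n.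
      theta_list [a * (r * s * t / q) ^ k, b * r ^ k / q ^ k,
                  s ^ k / (s ^ n * q ^ k), a * s ^ n * t ^ k / (b * q ^ k)] p
      / theta_list [a, b, 1 / s ^ n, a * s ^ n / b] p
      * (ell_poch a (r * s * t / q ^ 2) p k * ell_poch b r p k
         * ell_poch (1 / s ^ n) s p k * ell_poch (a * s ^ n / b) t p k)
      / (ell_poch q q p k * ell_poch (a * s * t / (b * q)) (s * t / q) p k
         * ell_poch (a * s ^ n * r * t / q) (r * t / q) p k
         * ell_poch (b * r * s / (q * s ^ n)) (r * s / q) p k)
      * q ^ k) = 0"
proof -
  define Npr where "Npr k = ell_poch (a * (r * s * t / q ^ 2)) (r * s * t / q ^ 2) p k * ell_poch (b * r) r p k
      * ell_poch (1 / s ^ n * s) s p k * ell_poch (a * s ^ n / b * t) t p k" for k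
  define Den where "Den k = ell_poch q q p k * ell_poch (a * s * t / (b * q)) (s * t / q) p k
        * ell_poch (a * s ^ n * r * t / q) (r * t / q) p k
        * ell_poch (b * r * s / (q * s ^ n)) (r * s / q) p k" for k
  define L0 where "L0 = theta_list [a, b, 1 / s ^ n, a * s ^ n / b] p"
  define TM where "TM k = theta_list [a * (r * s * t / q) ^ k, b * r ^ k / q ^ k,
                  s ^ k / (s ^ n * q ^ k), a * s ^ n * t ^ k / (b * q ^ k)] p
      / theta_list [a, b, 1 / s ^ n, a * s ^ n / b] p
      * (ell_poch a (r * s * t / q ^ 2) p k * ell_poch b r p k
         * ell_poch (1 / s ^ n) s p k * ell_poch (a * s ^ n / b) t p k)
      / (ell_poch q q p k * ell_poch (a * s * t / (b * q)) (s * t / q) p k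
         * ell_poch (a * s ^ n * r * t / q) (r * t / q) p k
         * ell_poch (b * r * s / (q * s ^ n)) (r * s / q) p k)
      * q ^ k" for k
  have L0nz: "L0 \<noteq> 0" unfolding L0_def by (rule den1)
  have Dnz: "Den k \<noteq> 0" if "k \<le> n" for k unfolding Den_def by (rule den2[OF that])
  have claim: "k \<le> n \<Longrightarrow> (\<Sum>j=0..k. TM j) = Npr k / Den k" for k
  proof (induction k)
    case 0
    have "TM 0 = L0 / L0" unfolding TM_def L0_def by (simp add: ell_poch_0)
    then show ?case using L0nz unfolding Npr_def Den_def by (simp add: ell_poch_0)
  next
    case (Suc m)
    then have mn: "m \<le> n" by simp
    have IH: "(\<Sum>j=0..m. TM j) = Npr m / Den m" using Suc.IH mn by simp
    define X where "X = theta (a * (r * s * t / q ^ 2) * (r * s * t / q ^ 2) ^ m) p * theta (b * r * r ^ m) p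
          * theta (1 / s ^ n * s * s ^ m) p * theta (a * s ^ n / b * t * t ^ m) p"
    define Y where "Y = theta (q * q ^ m) p * theta (a * s * t / (b * q) * (s * t / q) ^ m) p
          * theta (a * s ^ n * r * t / q * (r * t / q) ^ m) p
          * theta (b * r * s / (q * s ^ n) * (r * s / q) ^ m) p"
    define TS where "TS = theta (a * (r * s * t / q) ^ Suc m) p * theta (b * r ^ Suc m / q ^ Suc m) p
          * theta (s ^ Suc m / (s ^ n * q ^ Suc m)) p * theta (a * s ^ n * t ^ Suc m / (b * q ^ Suc m)) p"
    have XY: "X - Y = q ^ Suc m * TS"
      unfolding X_def Y_def TS_def by (rule step_identity[OF hp nz])
    have NprS: "Npr (Suc m) = Npr m * X"
      unfolding Npr_def X_def ell_poch_Suc by (simp add: mult_ac)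
    have DenS: "Den (Suc m) = Den m * Y"
      unfolding Den_def Y_def ell_poch_Suc by (simp add: mult_ac)
    have Ynz: "Y \<noteq> 0" using Dnz[OF Suc.prems] unfolding DenS by simp
    have Dmnz: "Den m \<noteq> 0" by (rule Dnz[OF mn])
    have TMS: "TM (Suc m) = TS / L0 * (L0 * Npr m) / (Den m * Y) * q ^ Suc m"
    proof -
      have num: "ell_poch a (r * s * t / q ^ 2) p (Suc m) * ell_poch b r p (Suc m)
         * ell_poch (1 / s ^ n) s p (Suc m) * ell_poch (a * s ^ n / b) t p (Suc m) = L0 * Npr m"
        unfolding L0_def Npr_def theta_list4 ell_poch_Suc' by (simp add: mult_ac)
      have tl: "theta_list [a * (r * s * t / q) ^ Suc m, b * r ^ Suc m / q ^ Suc m,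
                  s ^ Suc m / (s ^ n * q ^ Suc m), a * s ^ n * t ^ Suc m / (b * q ^ Suc m)] p = TS"
        unfolding TS_def theta_list4 ..
      have den: "ell_poch q q p (Suc m) * ell_poch (a * s * t / (b * q)) (s * t / q) p (Suc m)
         * ell_poch (a * s ^ n * r * t / q) (r * t / q) p (Suc m)
         * ell_poch (b * r * s / (q * s ^ n)) (r * s / q) p (Suc m) = Den m * Y"
        using DenS unfolding Den_def .
      show ?thesis unfolding TM_def num tl den L0_def[symmetric] ..
    qed
    have "(\<Sum>j=0..Suc m. TM j) = Npr m / Den m + TM (Suc m)"
      using IH by simp
    also have "\<dots> = Npr m * X / (Den m * Y)"
      unfolding TMS by (rule alg_step[OF L0nz Dmnz Ynz XY])
    also have "\<dots> = Npr (Suc m) / Den (Suc m)" unfolding NprS DenS ..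
    finally show ?case .
  qed
  have Nn: "Npr n = 0"
  proof -
    obtain n' where n': "n = Suc n'" using hn by (cases n) auto
    have one: "1 / s ^ n * s * s ^ n' = 1" unfolding n' using nz by simp
    have "theta (1 / s ^ n * s * s ^ n') p = 0" unfolding one by (rule theta_one[OF hp])
    then have "ell_poch (1 / s ^ n * s) s p n = 0"
      unfolding ell_poch_def n' by simp
    then show ?thesis unfolding Npr_def by simp
  qed
  have "(\<Sum>j=0..n. TM j) = 0" using claim[of n] Nn by simp
  then show ?thesis unfolding TM_def .
qed

end
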